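(* Normalize $\operatorname{var}(X)=1$ and $\operatorname{var}(W_1)=I_{d_1}$, and suppose $\operatorname{var}(Y,X,W_1)$ is positive definite. Let $r_X,r_Y,c\in\mathbb R^{d_1}$ and $b\ne\beta_{\text{med}}$. Then $b\in\mathcal B(r_X,r_Y,c)$ if and only if there exists $z\in\mathbb R\setminus\{0\}$ such that $k_1-bk_0=r_Y'\big(z\sqrt{1-\|c\|^2}(\sigma_{W_1,Y}-b\sigma_{W_1,X})-(k_1-bk_0)c\big)$, $z=r_X'\big(\sqrt{1-\|c\|^2}\sigma_{W_1,X}-cz\big)$, $z^2<k_0$, $(b-\beta_{\text{med}})^2<\text{devsq}(z)$, and $\|c\|^2<1$.
   Context: For random vectors $A,B$ with $\operatorname{var}(B)$ invertible, $A^{\perp B}=A-\operatorname{cov}(A,B)\operatorname{var}(B)^{-1}B$. $\sigma_{A,B}=\operatorname{cov}(A,B)$. $\beta_{\text{med}}$ is the coefficient on $X$ in the linear projection of $Y$ on $(1,X,W_1)$. $k_0=\operatorname{var}(X^{\perp W_1})$, $k_1=\operatorname{cov}(Y^{\perp W_1},X^{\perp W_1})$; $\text{devsq}(z)=\frac{\operatorname{var}(Y^{\perp X,W_1})}{k_0}\frac{z^2}{k_0-z^2}$. For $r_X,r_Y,c\in\mathbb R^{d_1}$, $\mathcal B(r_X,r_Y,c)$ is the set of $b\in\mathbb R$ such that for some $(p_1,g_1)\in\mathbb R^{d_1}\times\mathbb R^{d_1}$ (with $\Sigma_{\text{obs}}=\operatorname{var}(W_1)$): $\operatorname{cov}(Y,X)=b\operatorname{var}(X)+g_1'(\Sigma_{\text{obs}}+cr_X'+r_Yc'+r_Yr_X')p_1$;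 $\operatorname{cov}(Y,W_1)=b\operatorname{cov}(X,W_1)+g_1'(\Sigma_{\text{obs}}+r_Yc')$; $\operatorname{cov}(X,W_1)=p_1'(\Sigma_{\text{obs}}+r_Xc')$; $\operatorname{var}(Y)>b^2\operatorname{var}(X)+g_1'(\Sigma_{\text{obs}}+r_Yr_Y'+2r_Yc')g_1+2bg_1'(\Sigma_{\text{obs}}+cr_X'+r_Yc'+r_Yr_X')p_1$; $\operatorname{var}(X)>p_1'(\Sigma_{\text{obs}}+2r_Xc'+r_Xr_X')p_1$; $1>c'\Sigma_{\text{obs}}^{-1}c$. *)

theory Defs
  imports "HOL-Analysis.Analysis"
begin

text \<open>Second-moment model of the random vector (Y, X, W1): all quantities in the
statement depend only on the covariance matrix of (Y, X, W1), which is given by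
vY = var Y, vX = var X, covYX = cov(Y,X), covYW = cov(Y,W1) = cov(W1,Y),
covXW = cov(X,W1) = cov(W1,X), Sig = var W1 (a d1 x d1 matrix, d1 = CARD('d)).\<close>

definition outer :: "real^'n \<Rightarrow> real^'m \<Rightarrow> real^'m^'n" where
  "outer u v = (\<chi> i j. u$i * v$j)"

definition joint_var_posdef ::
  "real \<Rightarrow> real \<Rightarrow> real \<Rightarrow> real^'d \<Rightarrow> real^'d \<Rightarrow> real^'d^'d \<Rightarrow> bool" where
  "joint_var_posdef vY vX covYX covYW covXW Sig \<longleftrightarrow>
     (\<forall>a b (v::real^'d). (a, b, v) \<noteq> (0, 0, 0) \<longrightarrow>
        a^2 * vY + b^2 * vX + v \<bullet> (Sig *v v) + 2*a*b*covYX + 2*a*(covYW \<bullet> v)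
        + 2*b*(covXW \<bullet> v) > 0)"

text \<open>var((X,W1)), indexed by 'd option (None = X, Some i = i-th component of W1).\<close>
definition varXW :: "real \<Rightarrow> real^'d \<Rightarrow> real^'d^'d \<Rightarrow> real^('d option)^('d option)" where
  "varXW vX covXW Sig = (\<chi> i j. case i of
       None \<Rightarrow> (case j of None \<Rightarrow> vX | Some j' \<Rightarrow> covXW$j')
     | Some i' \<Rightarrow> (case j of None \<Rightarrow> covXW$i' | Some j' \<Rightarrow> Sig$i'$j'))"

definition covXWY :: "real \<Rightarrow> real^'d \<Rightarrow> real^('d option)" where
  "covXWY covYX covYW = (\<chi> i. case i of None \<Rightarrow> covYX | Some i' \<Rightarrow> covYW$i')"

text \<open>Linear projection coefficients of Y on (1, X, W1), restricted to (X, W1):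
var((X,W1))^{-1} cov((X,W1),Y); beta_med is the coefficient on X.\<close>
definition beta_med :: "real \<Rightarrow> real \<Rightarrow> real^'d \<Rightarrow> real^'d \<Rightarrow> real^'d^'d \<Rightarrow> real" where
  "beta_med vX covYX covYW covXW Sig =
     (matrix_inv (varXW vX covXW Sig) *v covXWY covYX covYW) $ None"

definition varY_perp_XW :: "real \<Rightarrow> real \<Rightarrow> real \<Rightarrow> real^'d \<Rightarrow> real^'d \<Rightarrow> real^'d^'d \<Rightarrow> real" where
  "varY_perp_XW vY vX covYX covYW covXW Sig =
     vY - covXWY covYX covYW \<bullet> (matrix_inv (varXW vX covXW Sig) *v covXWY covYX covYW)"

text \<open>k0 = var(X^{perp W1}), k1 = cov(Y^{perp W1}, X^{perp W1}).\<close>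
definition k0 :: "real \<Rightarrow> real^'d \<Rightarrow> real^'d^'d \<Rightarrow> real" where
  "k0 vX covXW Sig = vX - covXW \<bullet> (matrix_inv Sig *v covXW)"

definition k1 :: "real \<Rightarrow> real^'d \<Rightarrow> real^'d \<Rightarrow> real^'d^'d \<Rightarrow> real" where
  "k1 covYX covYW covXW Sig = covYX - covYW \<bullet> (matrix_inv Sig *v covXW)"

definition devsq :: "real \<Rightarrow> real \<Rightarrow> real \<Rightarrow> real^'d \<Rightarrow> real^'d \<Rightarrow> real^'d^'d \<Rightarrow> real \<Rightarrow> real" where
  "devsq vY vX covYX covYW covXW Sig z =
     varY_perp_XW vY vX covYX covYW covXW Sig / k0 vX covXW Sig * (z^2 / (k0 vX covXW Sig - z^2))"

definition Bset :: "real \<Rightarrow> real \<Rightarrow> real \<Rightarrow> real^'d \<Rightarrow> real^'d \<Rightarrow> real^'d^'d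
    \<Rightarrow> real^'d \<Rightarrow> real^'d \<Rightarrow> real^'d \<Rightarrow> real set" where
  "Bset vY vX covYX covYW covXW Sig rX rY c = {b. \<exists>p1 g1 :: real^'d.
     covYX = b * vX + g1 \<bullet> ((Sig + outer c rX + outer rY c + outer rY rX) *v p1) \<and>
     covYW = b *\<^sub>R covXW + (g1 v* (Sig + outer rY c)) \<and>
     covXW = p1 v* (Sig + outer rX c) \<and>
     vY > b^2 * vX + g1 \<bullet> ((Sig + outer rY rY + 2 *\<^sub>R outer rY c) *v g1)
          + 2 * b * (g1 \<bullet> ((Sig + outer c rX + outer rY c + outer rY rX) *v p1)) \<and>
     vX > p1 \<bullet> ((Sig + 2 *\<^sub>R outer rX c + outer rX rX) *v p1) \<and>
     1 > c \<bullet> (matrix_inv Sig *v c)}"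

end

theory Submission imports Defs begin

lemma minv: fixes A :: "real^'n^'n" assumes "invertible A"
  shows "A ** matrix_inv A = mat 1 \<and> matrix_inv A ** A = mat 1"
  unfolding matrix_inv_def using assms unfolding invertible_def by (rule someI_ex)

lemma minv_mat1: "matrix_inv (mat 1 :: real^'n^'n) = mat 1"
proof -
  have "invertible (mat 1 :: real^'n^'n)" unfolding invertible_def by (auto intro!: exI[of _ "mat 1"])
  from minv[OF this] show ?thesis by simp
qed

lemma sum_opt: "(\<Sum>i\<in>(UNIV::'d::finite option set). f i) = f None + (\<Sum>j\<in>UNIV. f (Some j))"
  by (simp add: UNIV_option_conv sum.reindex)

lemma outer_mv: "outer u v *v w = (v \<bullet> w) *\<^sub>R u"
  by (simp add: outer_def matrix_vector_mult_def vec_eq_iff inner_vec_def sum_distrib_left mult_ac)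

lemma outer_vm: "w v* outer u v = (w \<bullet> u) *\<^sub>R v"
  by (simp add: outer_def vector_matrix_mult_def vec_eq_iff inner_vec_def sum_distrib_right sum_distrib_left mult_ac)

lemma smat_mv: "((k::real) *\<^sub>R (A::real^'n^'m)) *v w = k *\<^sub>R (A *v w)"
  by (rule scaleR_matrix_vector_assoc[symmetric])

lemma mat1_vm: "w v* (mat 1 :: real^'n^'n) = w"
  by simp


lemma M_mv_None: "(varXW 1 s (mat 1) *v x) $ None = x $ None + (\<Sum>j\<in>UNIV. s $ j * x $ Some j)"
  by (simp add: matrix_vector_mult_def varXW_def sum_opt)

lemma delta_sum: "(\<Sum>k\<in>UNIV. (if (j::'n::finite) = k then 1 else 0) * (f k::real)) = f j"
proof -
  have "(\<Sum>k\<in>UNIV. (if j = k then 1 else 0) * (f k::real)) = (\<Sum>k\<in>UNIV. if j = k then f k else 0)"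
    by (rule sum.cong) auto
  thus ?thesis by simp
qed

lemma M_mv_Some: "(varXW 1 (s::real^'d) (mat 1) *v x) $ Some j = s $ j * x $ None + x $ Some j"
  by (simp add: matrix_vector_mult_def varXW_def sum_opt mat_def delta_sum)

lemma M_inv: assumes "s \<bullet> s < 1"
  shows "invertible (varXW 1 (s::real^'d) (mat 1))"
proof -
  have "\<forall>x. varXW 1 s (mat 1) *v x = 0 \<longrightarrow> x = 0"
  proof (intro allI impI)
    fix x :: "real^'d option" assume h: "varXW 1 s (mat 1) *v x = 0"
    have hs: "x $ Some j = - s $ j * x $ None" for j
      using arg_cong[OF h, of "\<lambda>v. v $ Some j"] by (simp add: M_mv_Some)
    have "x $ None + (\<Sum>j\<in>UNIV. s $ j * x $ Some j) = 0"
      using arg_cong[OF h, of "\<lambda>v. v $ None"] by (simp add: M_mv_None)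
    hence "x $ None * (1 - s \<bullet> s) = 0"
      by (simp add: hs inner_vec_def sum_distrib_left sum_distrib_right algebra_simps sum_negf power2_eq_square)
    hence x0: "x $ None = 0" using assms by simp
    show "x = 0"
    unfolding vec_eq_iff proof
      fix i show "x $ i = 0 $ i" by (cases i) (auto simp: x0 hs)
    qed
  qed
  thus ?thesis using invertible_left_inverse matrix_left_invertible_ker by blast
qed

lemma inner_sum_opt: "(u::real^'d::finite option) \<bullet> v = u $ None * v $ None + (\<Sum>j\<in>UNIV. u $ Some j * v $ Some j)"
  by (simp add: inner_vec_def sum_opt)

lemma sum_lin: "(\<Sum>j\<in>UNIV. (u::real^'d::finite)$j * (v$j - w$j * r)) = u \<bullet> v - (u \<bullet> w) * r"
  by (simp add: inner_vec_def algebra_simps sum_subtractf sum_distrib_right sum_distrib_left)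

lemma solve_M:
  fixes s t :: "real^'d" and cYX :: real
  assumes s1: "s \<bullet> s < 1"
  defines "K0 \<equiv> 1 - s \<bullet> s" and "K1 \<equiv> cYX - t \<bullet> s"
  shows "matrix_inv (varXW 1 s (mat 1)) *v covXWY cYX t =
     (\<chi> i. case i of None \<Rightarrow> K1/K0 | Some j \<Rightarrow> t$j - s$j * (K1/K0))"
proof -
  define xs :: "real^'d option" where "xs = (\<chi> i. case i of None \<Rightarrow> K1/K0 | Some j \<Rightarrow> t$j - s$j * (K1/K0))"
  have K0: "K0 > 0" using s1 by (simp add: K0_def)
  have "varXW 1 s (mat 1) *v xs = covXWY cYX t"
    unfolding vec_eq_iff
  proof
    fix i show "(varXW 1 s (mat 1) *v xs) $ i = covXWY cYX t $ i"
    proof (cases i)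
      case None
      have "K1/K0 + (\<Sum>j\<in>UNIV. s $ j * (t$j - s$j * (K1/K0))) = K1/K0 + s \<bullet> t - (s \<bullet> s) * (K1/K0)"
        using sum_lin[of s t s "K1/K0"] by linarith
      also have "\<dots> = K1/K0 * (1 - s \<bullet> s) + s \<bullet> t" by (simp add: algebra_simps)
      also have "\<dots> = cYX" using K0 by (simp add: K0_def[symmetric] K1_def inner_commute)
      finally show ?thesis using None by (simp add: M_mv_None xs_def covXWY_def)
    next
      case (Some j) thus ?thesis by (simp add: M_mv_Some xs_def covXWY_def)
    qed
  qed
  moreover have "matrix_inv (varXW 1 s (mat 1)) ** varXW 1 s (mat 1) = mat 1"
    using minv[OF M_inv[OF s1]] by blast
  ultimately have "matrix_inv (varXW 1 s (mat 1)) *v covXWY cYX t = xs"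
    by (metis matrix_vector_mul_assoc matrix_vector_mul_lid)
  thus ?thesis by (simp add: xs_def)
qed

lemma beta_med_eq:
  fixes s t :: "real^'d" and cYX :: real
  assumes s1: "s \<bullet> s < 1"
  shows "beta_med 1 cYX t s (mat 1) = (cYX - t \<bullet> s) / (1 - s \<bullet> s)"
  unfolding beta_med_def solve_M[OF s1] by simp

lemma aux_field: "(d::real) \<noteq> 0 \<Longrightarrow> c*((c-u)/d) + w - u*((c-u)/d) = w + (c-u)^2/d"
  by (simp add: field_simps power2_eq_square)

lemma varY_eq:
  fixes s t :: "real^'d" and cYX :: real
  assumes s1: "s \<bullet> s < 1"
  shows "varY_perp_XW vY 1 cYX t s (mat 1) = vY - t \<bullet> t - (cYX - t \<bullet> s)^2 / (1 - s \<bullet> s)"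
proof -
  have K0: "1 - s \<bullet> s > 0" using s1 by simp
  have "covXWY cYX t \<bullet> (\<chi> i. case i of None \<Rightarrow> (cYX - t \<bullet> s)/(1 - s \<bullet> s) | Some j \<Rightarrow> t$j - s$j * ((cYX - t \<bullet> s)/(1 - s \<bullet> s)))
     = cYX * ((cYX - t \<bullet> s)/(1 - s \<bullet> s)) + t \<bullet> t - (t \<bullet> s) * ((cYX - t \<bullet> s)/(1 - s \<bullet> s))"
    by (simp add: inner_sum_opt covXWY_def sum_lin del: times_divide_eq_right)
  also have "\<dots> = t \<bullet> t + (cYX - t \<bullet> s)^2 / (1 - s \<bullet> s)"
    by (rule aux_field) (use K0 in simp)
  finally show ?thesis unfolding varY_perp_XW_def solve_M[OF s1] by (simp del: times_divide_eq_right)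
qed

lemma k0_eq: "k0 1 s (mat 1) = 1 - s \<bullet> s" by (simp add: k0_def minv_mat1)
lemma k1_eq: "k1 cYX t s (mat 1) = cYX - t \<bullet> s" by (simp add: k1_def minv_mat1)

lemma vm_add: "(x::real^'n) v* (A + B) = x v* A + x v* (B::real^'m^'n)"
  by (simp add: vector_matrix_mult_def vec_eq_iff sum.distrib algebra_simps)

lemma Bset_iff:
  fixes s t rX rY c :: "real^'d"
  shows "b \<in> Bset vY 1 cYX t s (mat 1) rX rY c \<longleftrightarrow> (\<exists>p g.
     cYX = b + (g \<bullet> p + (rX \<bullet> p)*(g \<bullet> c) + (c \<bullet> p)*(rY \<bullet> g) + (rX \<bullet> p)*(rY \<bullet> g)) \<and>
     t = b *\<^sub>R s + g + (rY \<bullet> g) *\<^sub>R c \<and>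
     s = p + (rX \<bullet> p) *\<^sub>R c \<and>
     vY > b^2 + (g \<bullet> g + (rY \<bullet> g)^2 + 2*(c \<bullet> g)*(rY \<bullet> g))
        + 2*b*(g \<bullet> p + (rX \<bullet> p)*(g \<bullet> c) + (c \<bullet> p)*(rY \<bullet> g) + (rX \<bullet> p)*(rY \<bullet> g)) \<and>
     1 > p \<bullet> p + 2*(c \<bullet> p)*(rX \<bullet> p) + (rX \<bullet> p)^2 \<and>
     1 > c \<bullet> c)"
proof -
  have E1: "g \<bullet> ((mat 1 + outer c rX + outer rY c + outer rY rX) *v p) =
     g \<bullet> p + (rX \<bullet> p)*(g \<bullet> c) + (c \<bullet> p)*(rY \<bullet> g) + (rX \<bullet> p)*(rY \<bullet> g)" for g p :: "real^'d"
    by (simp add: matrix_vector_mult_add_rdistrib outer_mv inner_add_right inner_commute)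
  have E2: "g v* (mat 1 + outer rY c) = g + (rY \<bullet> g) *\<^sub>R c" for g :: "real^'d"
    by (simp add: vm_add outer_vm inner_commute)
  have E3: "p v* (mat 1 + outer rX c) = p + (rX \<bullet> p) *\<^sub>R c" for p :: "real^'d"
    by (simp add: vm_add outer_vm inner_commute)
  have E4: "g \<bullet> ((mat 1 + outer rY rY + 2 *\<^sub>R outer rY c) *v g) = g \<bullet> g + (rY \<bullet> g)^2 + 2*(c \<bullet> g)*(rY \<bullet> g)" for g :: "real^'d"
    by (simp add: matrix_vector_mult_add_rdistrib outer_mv smat_mv inner_add_right inner_commute power2_eq_square)
  have E5: "p \<bullet> ((mat 1 + 2 *\<^sub>R outer rX c + outer rX rX) *v p) = p \<bullet> p + 2*(c \<bullet> p)*(rX \<bullet> p) + (rX \<bullet> p)^2" for p :: "real^'d"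
    by (simp add: matrix_vector_mult_add_rdistrib outer_mv smat_mv inner_add_right inner_commute power2_eq_square)
  show ?thesis unfolding Bset_def mem_Collect_eq E1 E2 E3 E4 E5 minv_mat1 by (simp add: add.assoc)
qed

lemma final_ineq:
  fixes V K0 D z X :: real
  assumes K0: "K0 > 0" and zk: "z^2 < K0" and z0: "z \<noteq> 0"
    and X: "X * z^2 = K0^2 * D^2"
  shows "V + K0 * D^2 > X \<longleftrightarrow> D^2 < V / K0 * (z^2 / (K0 - z^2))"
proof -
  have z2: "z^2 > 0" using z0 by simp
  have d: "K0 - z^2 > 0" using zk by simp
  have "V + K0 * D^2 > X \<longleftrightarrow> (V + K0 * D^2) * z^2 > X * z^2"
    using z2 by (simp add: mult_less_cancel_right)
  also have "\<dots> \<longleftrightarrow> V * z^2 > K0 * D^2 * (K0 - z^2)"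
    unfolding X by (simp add: algebra_simps power2_eq_square)
  also have "\<dots> \<longleftrightarrow> D^2 * (K0 * (K0 - z^2)) < V * z^2"
    by (simp add: mult_ac)
  also have "\<dots> \<longleftrightarrow> D^2 < V * z^2 / (K0 * (K0 - z^2))"
    using K0 d by (simp add: pos_less_divide_eq)
  also have "V * z^2 / (K0 * (K0 - z^2)) = V / K0 * (z^2 / (K0 - z^2))" by simp
  finally show ?thesis .
qed

lemma aux_Vid: "1 - ss \<noteq> (0::real) \<Longrightarrow>
  vY - tt - (cYX - ts)^2 / (1 - ss) + (1 - ss) * (b - (cYX - ts) / (1 - ss))^2
  = vY - b^2 - 2*b*(cYX - b) - (tt - 2 * b * ts + b^2 * ss)"
proof -
  assume K: "1 - ss \<noteq> (0::real)"
  define K where "K = 1 - ss"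
  define k where "k = cYX - ts"
  have "K * (b - k / K)^2 = K * b^2 - 2 * b * k + k^2 / K"
    using K unfolding K_def[symmetric] by (simp add: power2_diff field_simps power2_eq_square)
  hence "vY - tt - k^2 / K + K * (b - k / K)^2 = vY - tt + K * b^2 - 2 * b * k" by simp
  also have "\<dots> = vY - b^2 - 2*b*(cYX - b) - (tt - 2 * b * ts + b^2 * ss)"
    unfolding K_def k_def by (simp add: algebra_simps power2_eq_square)
  finally show ?thesis unfolding K_def k_def .
qed

lemma core:
  fixes s t rX rY c :: "real^'d" and vY cYX b :: real
  defines "K0 \<equiv> 1 - s \<bullet> s" and "K1 \<equiv> cYX - t \<bullet> s"
  assumes s1: "s \<bullet> s < 1" and bne: "b \<noteq> K1 / K0"
  shows "(\<exists>p g.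
     cYX = b + (g \<bullet> p + (rX \<bullet> p)*(g \<bullet> c) + (c \<bullet> p)*(rY \<bullet> g) + (rX \<bullet> p)*(rY \<bullet> g)) \<and>
     t = b *\<^sub>R s + g + (rY \<bullet> g) *\<^sub>R c \<and>
     s = p + (rX \<bullet> p) *\<^sub>R c \<and>
     vY > b^2 + (g \<bullet> g + (rY \<bullet> g)^2 + 2*(c \<bullet> g)*(rY \<bullet> g))
        + 2*b*(g \<bullet> p + (rX \<bullet> p)*(g \<bullet> c) + (c \<bullet> p)*(rY \<bullet> g) + (rX \<bullet> p)*(rY \<bullet> g)) \<and>
     1 > p \<bullet> p + 2*(c \<bullet> p)*(rX \<bullet> p) + (rX \<bullet> p)^2 \<and>
     1 > c \<bullet> c) \<longleftrightarrow>
    (\<exists>z::real. z \<noteq> 0 \<and>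
      K1 - b * K0 = rY \<bullet> ((z * sqrt (1 - (norm c)^2)) *\<^sub>R (t - b *\<^sub>R s) - (K1 - b * K0) *\<^sub>R c) \<and>
      z = rX \<bullet> (sqrt (1 - (norm c)^2) *\<^sub>R s - z *\<^sub>R c) \<and>
      z^2 < K0 \<and>
      (b - K1/K0)^2 < (vY - t \<bullet> t - K1^2/K0) / K0 * (z^2 / (K0 - z^2)) \<and>
      (norm c)^2 < 1)"
    (is "?L \<longleftrightarrow> ?R")
proof -
  have K0: "K0 > 0" using s1 by (simp add: K0_def)
  have Dne: "K1 - b * K0 \<noteq> 0" using bne K0 by (auto simp: field_simps)
  define D where "D = b - K1/K0"
  define V where "V = vY - t \<bullet> t - K1^2/K0"
  define h where "h = t - b *\<^sub>R s"
  have KD: "(K1 - b * K0)^2 = K0^2 * D^2" using K0 unfolding D_def by (simp add: field_simps power2_eq_square)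
  have Vid: "V + K0 * D^2 = vY - b^2 - 2*b*(cYX - b) - h \<bullet> h"
  proof -
    have hh: "h \<bullet> h = t \<bullet> t - 2 * b * (t \<bullet> s) + b^2 * (s \<bullet> s)"
      unfolding h_def by (simp add: inner_diff_left inner_diff_right inner_commute power2_eq_square algebra_simps)
    show ?thesis unfolding hh V_def D_def K1_def K0_def
      by (rule aux_Vid) (use s1 in simp)
  qed
  have nc: "(norm c)^2 = c \<bullet> c" by (simp add: power2_norm_eq_inner)
  show ?thesis
  proof
    assume ?L
    then obtain p g where h1: "cYX = b + (g \<bullet> p + (rX \<bullet> p)*(g \<bullet> c) + (c \<bullet> p)*(rY \<bullet> g) + (rX \<bullet> p)*(rY \<bullet> g))"
      and h2: "t = b *\<^sub>R s + g + (rY \<bullet> g) *\<^sub>R c" and h3: "s = p + (rX \<bullet> p) *\<^sub>R c"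
      and h4: "vY > b^2 + (g \<bullet> g + (rY \<bullet> g)^2 + 2*(c \<bullet> g)*(rY \<bullet> g))
        + 2*b*(g \<bullet> p + (rX \<bullet> p)*(g \<bullet> c) + (c \<bullet> p)*(rY \<bullet> g) + (rX \<bullet> p)*(rY \<bullet> g))"
      and h5: "1 > p \<bullet> p + 2*(c \<bullet> p)*(rX \<bullet> p) + (rX \<bullet> p)^2" and h6: "1 > c \<bullet> c" by blast
    define a where "a = rX \<bullet> p"
    define e where "e = rY \<bullet> g"
    define q where "q = 1 - c \<bullet> c"
    define \<sigma> where "\<sigma> = sqrt q"
    have q0: "q > 0" using h6 by (simp add: q_def)
    have sig0: "\<sigma> > 0" using q0 by (simp add: \<sigma>_def)
    have sig2: "\<sigma> * \<sigma> = q" using q0 by (simp add: \<sigma>_def)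
    have sq: "sqrt (1 - (norm c)^2) = \<sigma>" by (simp add: nc \<sigma>_def q_def)
    have pe: "p = s - a *\<^sub>R c" using h3 by (simp add: a_def)
    have ge: "g = h - e *\<^sub>R c" using h2 by (simp add: e_def h_def algebra_simps)
    have I1: "g \<bullet> p + a*(g \<bullet> c) + (c \<bullet> p)*e + a*e = h \<bullet> s + a*e*q"
      unfolding pe ge q_def by (simp add: inner_diff_left inner_diff_right inner_commute algebra_simps)
    have Q5: "p \<bullet> p + 2*(c \<bullet> p)*a + a^2 = s \<bullet> s + a^2 * q"
      unfolding pe q_def by (simp add: inner_diff_left inner_diff_right inner_commute algebra_simps power2_eq_square)
    have Q4: "g \<bullet> g + e^2 + 2*(c \<bullet> g)*e = h \<bullet> h + e^2 * q"
      unfolding ge q_def by (simp add: inner_diff_left inner_diff_right inner_commute algebra_simps power2_eq_square)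
    have eqA: "a = rX \<bullet> s - a * (rX \<bullet> c)"
      using arg_cong[OF pe, of "\<lambda>v. rX \<bullet> v"] by (simp add: a_def inner_diff_right)
    have eqE: "e = rY \<bullet> h - e * (rY \<bullet> c)"
      using arg_cong[OF ge, of "\<lambda>v. rY \<bullet> v"] by (simp add: e_def inner_diff_right)
    have hs: "h \<bullet> s = t \<bullet> s - b * (s \<bullet> s)" by (simp add: h_def inner_diff_left)
    have KK: "K1 - b * K0 = a * e * q"
      using h1 I1 hs unfolding K1_def K0_def a_def[symmetric] e_def[symmetric] by (simp add: algebra_simps)
    define z where "z = a * \<sigma>"
    have a0: "a \<noteq> 0" using KK Dne by auto
    have z0: "z \<noteq> 0" using a0 sig0 by (simp add: z_def)
    have zs: "z * \<sigma> = a * q" by (simp add: z_def sig2[symmetric] mult.assoc)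
    have z2: "z^2 = a^2 * q" by (simp add: z_def power2_eq_square sig2[symmetric] mult_ac)
    have E1: "K1 - b * K0 = rY \<bullet> ((z * sqrt (1 - (norm c)^2)) *\<^sub>R (t - b *\<^sub>R s) - (K1 - b * K0) *\<^sub>R c)"
    proof -
      have "rY \<bullet> ((z * sqrt (1 - (norm c)^2)) *\<^sub>R (t - b *\<^sub>R s) - (K1 - b * K0) *\<^sub>R c)
          = a * q * (rY \<bullet> h - e * (rY \<bullet> c))"
        unfolding sq zs KK h_def[symmetric] by (simp add: inner_diff_right algebra_simps)
      also have "\<dots> = K1 - b * K0" using eqE KK by simp
      finally show ?thesis by simp
    qed
    have E2: "z = rX \<bullet> (sqrt (1 - (norm c)^2) *\<^sub>R s - z *\<^sub>R c)"
    proof -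
      have "rX \<bullet> (sqrt (1 - (norm c)^2) *\<^sub>R s - z *\<^sub>R c) = \<sigma> * (rX \<bullet> s - a * (rX \<bullet> c))"
        unfolding sq z_def by (simp add: inner_diff_right algebra_simps)
      also have "\<dots> = z" using eqA by (simp add: z_def mult.commute)
      finally show ?thesis by simp
    qed
    have E3: "z^2 < K0" using h5 Q5 z2 unfolding K0_def a_def[symmetric] by linarith
    have hsum: "g \<bullet> p + (rX \<bullet> p)*(g \<bullet> c) + (c \<bullet> p)*(rY \<bullet> g) + (rX \<bullet> p)*(rY \<bullet> g) = cYX - b"
      using h1 by simp
    have hsum': "g \<bullet> p + a*(g \<bullet> c) + (c \<bullet> p)*e + a*e = cYX - b"
      using hsum by (simp add: a_def e_def mult_ac)
    have h4': "vY > b^2 + (g \<bullet> g + e^2 + 2*(c \<bullet> g)*e) + 2*b*(g \<bullet> p + a*(g \<bullet> c) + (c \<bullet> p)*e + a*e)"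
      using h4 by (simp add: a_def e_def mult_ac)
    have "vY > b^2 + (h \<bullet> h + e^2 * q) + 2*b*(cYX - b)"
      using h4' by (simp only: Q4 hsum')
    hence G: "V + K0 * D^2 > e^2 * q" unfolding Vid by linarith
    have X: "(e^2 * q) * z^2 = K0^2 * D^2"
      unfolding KD[symmetric] KK z2 by (simp add: power2_eq_square mult_ac)
    have E4: "D^2 < V / K0 * (z^2 / (K0 - z^2))"
      using final_ineq[OF K0 E3 z0 X] G by simp
    show ?R using z0 E1 E2 E3 E4 h6 nc unfolding D_def V_def by auto
  next
    assume ?R
    then obtain z where z0: "z \<noteq> 0"
      and E1: "K1 - b * K0 = rY \<bullet> ((z * sqrt (1 - (norm c)^2)) *\<^sub>R (t - b *\<^sub>R s) - (K1 - b * K0) *\<^sub>R c)"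
      and E2: "z = rX \<bullet> (sqrt (1 - (norm c)^2) *\<^sub>R s - z *\<^sub>R c)"
      and E3: "z^2 < K0"
      and E4: "(b - K1/K0)^2 < (vY - t \<bullet> t - K1^2/K0) / K0 * (z^2 / (K0 - z^2))"
      and h6: "(norm c)^2 < 1" by blast
    define q where "q = 1 - c \<bullet> c"
    define \<sigma> where "\<sigma> = sqrt q"
    have q0: "q > 0" using h6 nc by (simp add: q_def)
    have sig0: "\<sigma> > 0" using q0 by (simp add: \<sigma>_def)
    have sig2: "\<sigma> * \<sigma> = q" using q0 by (simp add: \<sigma>_def)
    have sq: "sqrt (1 - (norm c)^2) = \<sigma>" by (simp add: nc \<sigma>_def q_def)
    define a where "a = z / \<sigma>"
    define e where "e = (K1 - b * K0) / (z * \<sigma>)"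
    define p where "p = s - a *\<^sub>R c"
    define g where "g = h - e *\<^sub>R c"
    have zs: "z = a * \<sigma>" using sig0 by (simp add: a_def)
    have eA: "rX \<bullet> p = a"
    proof -
      have "z = \<sigma> * (rX \<bullet> s) - z * (rX \<bullet> c)" using E2 unfolding sq by (simp add: inner_diff_right)
      hence "a * \<sigma> = \<sigma> * (rX \<bullet> s - a * (rX \<bullet> c))" unfolding zs by (simp add: algebra_simps)
      hence "a = rX \<bullet> s - a * (rX \<bullet> c)" using sig0 by (simp add: mult.commute)
      thus ?thesis by (simp add: p_def inner_diff_right)
    qed
    have zsn: "z * \<sigma> \<noteq> 0" using z0 sig0 by simp
    have KK: "K1 - b * K0 = e * (z * \<sigma>)" using zsn by (simp add: e_def)
    have eE: "rY \<bullet> g = e"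
    proof -
      have "K1 - b * K0 = (z * \<sigma>) * (rY \<bullet> h) - (K1 - b * K0) * (rY \<bullet> c)"
        using E1 unfolding sq h_def[symmetric] by (simp add: inner_diff_right)
      hence "e * (z * \<sigma>) = (z * \<sigma>) * (rY \<bullet> h - e * (rY \<bullet> c))" unfolding KK by (simp add: algebra_simps)
      hence "e = rY \<bullet> h - e * (rY \<bullet> c)" using zsn by (simp add: mult.commute)
      thus ?thesis by (simp add: g_def inner_diff_right)
    qed
    have aeq: "a * e * q = K1 - b * K0" unfolding KK zs sig2[symmetric] by (simp add: mult_ac)
    have I1: "g \<bullet> p + a*(g \<bullet> c) + (c \<bullet> p)*e + a*e = h \<bullet> s + a*e*q"
      unfolding p_def g_def q_def by (simp add: inner_diff_left inner_diff_right inner_commute algebra_simps)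
    have Q5: "p \<bullet> p + 2*(c \<bullet> p)*a + a^2 = s \<bullet> s + a^2 * q"
      unfolding p_def q_def by (simp add: inner_diff_left inner_diff_right inner_commute algebra_simps power2_eq_square)
    have Q4: "g \<bullet> g + e^2 + 2*(c \<bullet> g)*e = h \<bullet> h + e^2 * q"
      unfolding g_def q_def by (simp add: inner_diff_left inner_diff_right inner_commute algebra_simps power2_eq_square)
    have hs: "h \<bullet> s = t \<bullet> s - b * (s \<bullet> s)" by (simp add: h_def inner_diff_left)
    have z2: "z^2 = a^2 * q" by (simp add: zs power2_eq_square sig2[symmetric] mult_ac)
    have hsum: "g \<bullet> p + a*(g \<bullet> c) + (c \<bullet> p)*e + a*e = cYX - b"
      using I1 hs aeq unfolding K1_def K0_def by (simp add: algebra_simps)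
    have X: "(e^2 * q) * z^2 = K0^2 * D^2"
      unfolding KD[symmetric] aeq[symmetric] z2 by (simp add: power2_eq_square mult_ac)
    have G: "V + K0 * D^2 > e^2 * q"
      using final_ineq[OF K0 E3 z0 X] E4 unfolding D_def V_def by simp
    have c1: "cYX = b + (g \<bullet> p + (rX \<bullet> p)*(g \<bullet> c) + (c \<bullet> p)*(rY \<bullet> g) + (rX \<bullet> p)*(rY \<bullet> g))"
      using hsum unfolding eA eE by simp
    have c2: "t = b *\<^sub>R s + g + (rY \<bullet> g) *\<^sub>R c" unfolding eE by (simp add: g_def h_def)
    have c3: "s = p + (rX \<bullet> p) *\<^sub>R c" unfolding eA by (simp add: p_def)
    have c4: "vY > b^2 + (g \<bullet> g + (rY \<bullet> g)^2 + 2*(c \<bullet> g)*(rY \<bullet> g))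
        + 2*b*(g \<bullet> p + (rX \<bullet> p)*(g \<bullet> c) + (c \<bullet> p)*(rY \<bullet> g) + (rX \<bullet> p)*(rY \<bullet> g))"
      using G Vid Q4 hsum unfolding eA eE by (simp add: mult_ac)
    have c5: "1 > p \<bullet> p + 2*(c \<bullet> p)*(rX \<bullet> p) + (rX \<bullet> p)^2"
      using Q5 E3 z2 unfolding eA K0_def by linarith
    have c6: "1 > c \<bullet> c" using h6 nc by simp
    show ?L using c1 c2 c3 c4 c5 c6 by blast
  qed
qed

theorem mainTheorem17:
  fixes vY covYX b :: real and covYW covXW rX rY c :: "real^'d"
  assumes pd: "joint_var_posdef vY 1 covYX covYW covXW (mat 1)"
    and bne: "b \<noteq> beta_med 1 covYX covYW covXW (mat 1)"
  shows "b \<in> Bset vY 1 covYX covYW covXW (mat 1) rX rY c \<longleftrightarrow>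
    (\<exists>z::real. z \<noteq> 0 \<and>
      k1 covYX covYW covXW (mat 1) - b * k0 1 covXW (mat 1) =
        rY \<bullet> ((z * sqrt (1 - (norm c)^2)) *\<^sub>R (covYW - b *\<^sub>R covXW)
               - (k1 covYX covYW covXW (mat 1) - b * k0 1 covXW (mat 1)) *\<^sub>R c) \<and>
      z = rX \<bullet> (sqrt (1 - (norm c)^2) *\<^sub>R covXW - z *\<^sub>R c) \<and>
      z^2 < k0 1 covXW (mat 1) \<and>
      (b - beta_med 1 covYX covYW covXW (mat 1))^2 < devsq vY 1 covYX covYW covXW (mat 1) z \<and>
      (norm c)^2 < 1)"
proof -
  have "(0::real, 1::real, - covXW) \<noteq> (0, 0, 0)" by simp
  hence "0^2 * vY + 1^2 * 1 + (- covXW) \<bullet> (mat 1 *v (- covXW)) + 2*0*1*covYX + 2*0*(covYW \<bullet> (- covXW))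
        + 2*1*(covXW \<bullet> (- covXW)) > (0::real)"
    using pd unfolding joint_var_posdef_def by blast
  hence s1: "covXW \<bullet> covXW < 1" by simp
  have bne': "b \<noteq> (covYX - covYW \<bullet> covXW) / (1 - covXW \<bullet> covXW)"
    using bne unfolding beta_med_eq[OF s1] .
  show ?thesis
    unfolding Bset_iff devsq_def k0_eq k1_eq beta_med_eq[OF s1] varY_eq[OF s1]
    by (rule core[OF s1 bne'])
qed

end
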